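(* In the binary model, if $\lambda\le\frac12$, then the Lebesgue measure of $S$ is $0$ almost surely.
   Context: Binary model. Let $T=\{1,2\}^*$ be the set of finite words over $\{1,2\}$ (the rooted binary tree; $v|j$ is the prefix of $v$ of length $j$). Let $\{a_v\}_{v\in T,\,|v|\ge1}$ be i.i.d. random variables with $\mathbb{P}(a_v=0)=\mathbb{P}(a_v=1)=\frac12$. Fix $\lambda\in(0,1)$. For $\omega\in\{1,2\}^{\mathbb{N}}$ put $f(\omega)=\sum_{j\ge1}a_{\omega|j}\lambda^j$. Let $\mu$ be the image under $f$ of the uniform product measure on $\{1,2\}^{\mathbb{N}}$, and $S=f(\{1,2\}^{\mathbb{N}})$ its (random, compact) support. *)

theory Defs
  imports "HOL-Probability.Probability"
begin

text \<open>Binary model. Letters 1,2 are encoded as False,True; finite words are bool lists,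
  infinite words are functions nat \<Rightarrow> bool. The prefix of length j of omega is
  map omega [0..<j].\<close>

definition label_space :: "(bool list \<Rightarrow> bool) measure" where
  "label_space = PiM UNIV (\<lambda>_. measure_pmf (bernoulli_pmf (1/2)))"

definition binary_f :: "real \<Rightarrow> (bool list \<Rightarrow> bool) \<Rightarrow> (nat \<Rightarrow> bool) \<Rightarrow> real" where
  "binary_f lam a \<omega> = (\<Sum>j. (if a (map \<omega> [0..<Suc j]) then 1 else 0) * lam ^ Suc j)"

definition binary_S :: "real \<Rightarrow> (bool list \<Rightarrow> bool) \<Rightarrow> real set" where
  "binary_S lam a = range (binary_f lam a)"

end

theory Submission
  imports Defs
begin

definition hit :: "(bool list \<Rightarrow> bool) \<Rightarrow> bool list \<Rightarrow> bool list \<Rightarrow> bool" where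
  "hit a u d \<longleftrightarrow> (\<exists>v\<in>{v. length v = length d}. \<forall>j<length d. a (u @ take (Suc j) v) = d ! j)"

definition val :: "real \<Rightarrow> bool list \<Rightarrow> real" where
  "val lam d = (\<Sum>j<length d. (if d ! j then 1 else 0) * lam ^ Suc j)"

definition DD :: "(bool list \<Rightarrow> bool) \<Rightarrow> nat \<Rightarrow> bool list set" where
  "DD a n = {d. length d = n \<and> hit a [] d}"

lemma finite_len: "finite {d::bool list. length d = n}"
proof -
  have "{d::bool list. length d = n} = {xs. set xs \<subseteq> UNIV \<and> length xs = n}" by auto
  then show ?thesis using finite_lists_length_eq[of "UNIV::bool set" n] by simp
qed

lemma card_len: "card {d::bool list. length d = n} = 2 ^ n"
proof -
  have "{d::bool list. length d = n} = {xs. set xs \<subseteq> UNIV \<and> length xs = n}" by auto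
  then show ?thesis using card_lists_length_eq[of "UNIV::bool set" n] by simp
qed

lemma finite_DD: "finite (DD a n)"
  unfolding DD_def by (rule finite_subset[OF _ finite_len[of n]]) auto

lemma card_DD: "card (DD a n) \<le> 2 ^ n"
  unfolding DD_def by (metis (no_types, lifting) card_len card_mono finite_len mem_Collect_eq subsetI)

lemma cover:
  fixes lam :: real
  assumes "0 < lam" "lam < 1"
  shows "\<exists>d\<in>DD a n. val lam d \<le> binary_f lam a \<omega> \<and> binary_f lam a \<omega> \<le> val lam d + lam ^ Suc n / (1 - lam)"
proof -
  define t where "t j = (if a (map \<omega> [0..<Suc j]) then 1 else 0) * lam ^ Suc j" for j
  define d where "d = map (\<lambda>j. a (map \<omega> [0..<Suc j])) [0..<n]"
  have ld: "length d = n" by (simp add: d_def)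
  have "hit a [] d"
    unfolding hit_def
  proof (rule bexI[of _ "map \<omega> [0..<n]"])
    show "\<forall>j<length d. a ([] @ take (Suc j) (map \<omega> [0..<n])) = d ! j"
      by (simp add: d_def take_map)
  qed (simp add: ld)
  then have dD: "d \<in> DD a n" by (simp add: DD_def ld)
  have t0: "0 \<le> t j" for j using assms by (simp add: t_def)
  have tle: "t j \<le> lam ^ Suc j" for j using assms by (simp add: t_def)
  have sg: "summable (\<lambda>j. lam ^ Suc j)"
    using assms by (simp add: summable_geometric)
  have st: "summable t"
    by (rule summable_comparison_test[OF _ sg]) (use t0 tle in auto)
  have f: "binary_f lam a \<omega> = (\<Sum>j. t (j + n)) + (\<Sum>j<n. t j)"
    unfolding binary_f_def t_def[symmetric] by (rule suminf_split_initial_segment[OF st])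
  have v: "(\<Sum>j<n. t j) = val lam d"
    unfolding val_def ld by (simp add: t_def d_def)
  have st2: "summable (\<lambda>j. t (j + n))" using st by (simp add: summable_iff_shift)
  have sg2: "summable (\<lambda>j. lam ^ Suc (j + n))" using sg by (simp add: summable_iff_shift)
  have "(\<Sum>j. t (j + n)) \<le> (\<Sum>j. lam ^ Suc (j + n))"
    by (rule suminf_le) (use tle st2 sg2 in auto)
  also have "(\<Sum>j. lam ^ Suc (j + n)) = lam ^ Suc n / (1 - lam)"
  proof -
    have "(\<lambda>j. lam ^ Suc (j + n)) = (\<lambda>j. lam ^ Suc n * lam ^ j)"
      by (auto simp: power_add[symmetric] ac_simps)
    moreover have "(\<Sum>j. lam ^ Suc n * lam ^ j) = lam ^ Suc n * (1 / (1 - lam))"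
      using assms by (simp add: suminf_mult suminf_geometric summable_geometric)
    ultimately show ?thesis by simp
  qed
  finally have up: "(\<Sum>j. t (j + n)) \<le> lam ^ Suc n / (1 - lam)" .
  have lo: "0 \<le> (\<Sum>j. t (j + n))" by (rule suminf_nonneg[OF st2]) (use t0 in auto)
  show ?thesis using dD f v up lo by (intro bexI[of _ d]) auto
qed

lemma null_crit:
  fixes lam :: real
  assumes "0 < lam" "lam < 1"
    and eps: "\<And>e. e > 0 \<Longrightarrow> \<exists>n. real (card (DD a n)) * (lam ^ Suc n / (1 - lam)) < e"
  shows "binary_S lam a \<in> null_sets lebesgue"
proof -
  define r where "r n = lam ^ Suc n / (1 - lam)" for n
  define U where "U n = (\<Union>d\<in>DD a n. {val lam d .. val lam d + r n})" for n
  define N where "N = (\<Inter>n. U n)"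
  have Us: "U n \<in> sets lborel" for n
    unfolding U_def using finite_DD by (intro sets.finite_UN) auto
  have Ns: "N \<in> sets lborel" unfolding N_def using Us by auto
  have r0: "0 \<le> r n" for n using assms by (simp add: r_def)
  have SN: "binary_S lam a \<subseteq> N"
  proof
    fix x assume "x \<in> binary_S lam a"
    then obtain \<omega> where x: "x = binary_f lam a \<omega>" unfolding binary_S_def by auto
    show "x \<in> N" unfolding N_def
    proof
      fix n
      obtain d where "d \<in> DD a n" "val lam d \<le> x" "x \<le> val lam d + r n"
        using cover[OF assms(1,2), of a n \<omega>] x unfolding r_def by blast
      then show "x \<in> U n" unfolding U_def by auto
    qed
  qed
  have EU: "emeasure lborel (U n) \<le> ennreal (real (card (DD a n)) * r n)" for n
  proof -
    have "emeasure lborel (U n) \<le> (\<Sum>d\<in>DD a n. emeasure lborel {val lam d .. val lam d + r n})"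
      unfolding U_def by (rule emeasure_subadditive_finite) (use finite_DD in auto)
    also have "\<dots> = (\<Sum>d\<in>DD a n. ennreal (r n))"
      using r0 by simp
    also have "\<dots> = ennreal (real (card (DD a n)) * r n)"
      using r0 by (simp add: ennreal_mult' ennreal_of_nat_eq_real_of_nat)
    finally show ?thesis .
  qed
  have "emeasure lborel N \<le> 0"
  proof (rule ennreal_le_epsilon)
    fix e :: real assume "0 < e"
    from eps[OF this] obtain n where n: "real (card (DD a n)) * r n < e" unfolding r_def by blast
    have "emeasure lborel N \<le> emeasure lborel (U n)"
      by (rule emeasure_mono) (use Us in \<open>auto simp: N_def\<close>)
    also have "\<dots> \<le> ennreal (real (card (DD a n)) * r n)" by (rule EU)
    also have "\<dots> \<le> 0 + ennreal e" using n by (simp add: ennreal_leI)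
    finally show "emeasure lborel N \<le> 0 + ennreal e" .
  qed
  then have "N \<in> null_sets lborel" using Ns by (simp add: null_sets_def)
  then show ?thesis unfolding null_sets_completion_iff2 using SN by blast
qed


abbreviation Bm :: "bool measure" where "Bm \<equiv> measure_pmf (bernoulli_pmf (1/2))"

interpretation LP: product_prob_space "\<lambda>_::bool list. Bm" "UNIV :: bool list set"
  by unfold_locales (auto simp: prob_space_measure_pmf)

lemma label_space_eq: "label_space = PiM UNIV (\<lambda>_::bool list. Bm)"
  by (simp add: label_space_def)

lemma space_PiB: "space (PiM K (\<lambda>_::bool list. Bm)) = PiE K (\<lambda>_. UNIV)"
  by (simp add: space_PiM)

lemma space_label: "space label_space = UNIV"
  by (simp add: label_space_def space_PiM)

lemma comp_meas: "(\<lambda>b. b w) \<in> measurable (PiM K (\<lambda>_::bool list. Bm)) (count_space UNIV)"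
proof (cases "w \<in> K")
  case True
  have "(\<lambda>b. b w) \<in> measurable (PiM K (\<lambda>_::bool list. Bm)) Bm"
    by (rule measurable_component_singleton[OF True])
  then show ?thesis by (simp add: measurable_cong_sets)
next
  case False
  have "(\<lambda>b. undefined) \<in> measurable (PiM K (\<lambda>_::bool list. Bm)) (count_space UNIV)" by simp
  then show ?thesis
    by (rule measurable_cong[THEN iffD1, rotated]) (use False in \<open>auto simp: space_PiM PiE_def extensional_def\<close>)
qed

lemma sets_hit:
  assumes [measurable]: "\<And>w. (\<lambda>b. b w) \<in> measurable N (count_space UNIV)"
  shows "{b \<in> space N. hit b u d} \<in> sets N"
  unfolding hit_def using finite_len by measurable


lemma prob_space_label: "prob_space label_space"
  unfolding label_space_def by (rule prob_space_PiM) (simp add: prob_space_measure_pmf)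

lemma indep_coords: "prob_space.indep_vars label_space (\<lambda>_. Bm) (\<lambda>i \<omega>. \<omega> i) UNIV"
proof -
  interpret prob_space label_space by (rule prob_space_label)
  have rv: "random_variable Bm (\<lambda>\<omega>. \<omega> i)" for i
    unfolding label_space_eq by (rule measurable_component_singleton) simp
  show ?thesis
  proof (subst indep_vars_iff_distr_eq_PiM[OF _ rv])
    have "distr label_space (Pi\<^sub>M UNIV (\<lambda>_. Bm)) (\<lambda>x. \<lambda>i\<in>UNIV. x i) = label_space"
      unfolding label_space_eq restrict_UNIV by (simp add: distr_id)
    also have "\<dots> = (\<Pi>\<^sub>M i\<in>UNIV. distr label_space Bm (\<lambda>\<omega>. \<omega> i))"
      unfolding label_space_eq by (simp add: LP.PiM_component)
    finally show "distr label_space (Pi\<^sub>M UNIV (\<lambda>_. Bm)) (\<lambda>x. \<lambda>i\<in>UNIV. x i) = (\<Pi>\<^sub>M i\<in>UNIV. distr label_space Bm (\<lambda>\<omega>. \<omega> i))" .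
  qed simp
qed

lemma hit_Nil: "hit a u []"
  unfolding hit_def by auto

lemma hit_Cons: "hit a u (x#d) \<longleftrightarrow> (a (u@[False]) = x \<and> hit a (u@[False]) d) \<or> (a (u@[True]) = x \<and> hit a (u@[True]) d)"
proof
  assume "hit a u (x#d)"
  then obtain v where lv: "length v = Suc (length d)"
    and H: "\<And>j. j < Suc (length d) \<Longrightarrow> a (u @ take (Suc j) v) = (x#d) ! j"
    unfolding hit_def by auto
  then obtain b v' where v: "v = b # v'" by (cases v) auto
  have 0: "a (u@[b]) = x" using H[of 0] v by simp
  have "hit a (u@[b]) d" unfolding hit_def
  proof (rule bexI[of _ v'])
    show "\<forall>j<length d. a ((u @ [b]) @ take (Suc j) v') = d ! j"
      using H v by (metis Suc_less_eq append_Cons append_assoc nth_Cons_Suc self_append_conv2 take_Suc_Cons)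
  qed (use lv v in simp)
  with 0 show "(a (u@[False]) = x \<and> hit a (u@[False]) d) \<or> (a (u@[True]) = x \<and> hit a (u@[True]) d)"
    by (cases b) auto
next
  have *: "hit a u (x#d)" if "a (u@[b]) = x" "hit a (u@[b]) d" for b
  proof -
    from that(2) obtain v' where lv: "length v' = length d"
      and H: "\<And>j. j < length d \<Longrightarrow> a ((u@[b]) @ take (Suc j) v') = d ! j"
      unfolding hit_def by auto
    show ?thesis unfolding hit_def
    proof (rule bexI[of _ "b#v'"])
      show "\<forall>j<length (x#d). a (u @ take (Suc j) (b#v')) = (x#d) ! j"
      proof (intro allI impI)
        fix j assume "j < length (x#d)"
        then show "a (u @ take (Suc j) (b#v')) = (x#d) ! j"
          using H that(1) by (cases j) auto
      qed
    qed (use lv in simp)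
  qed
  assume "(a (u@[False]) = x \<and> hit a (u@[False]) d) \<or> (a (u@[True]) = x \<and> hit a (u@[True]) d)"
  then show "hit a u (x#d)" using * by blast
qed

lemma hit_restrict:
  assumes "K = {u @ b # w |w. w \<noteq> []}"
  shows "hit (restrict a K) (u@[b]) d \<longleftrightarrow> hit a (u@[b]) d"
proof -
  have *: "restrict a K ((u@[b]) @ take (Suc j) v) = a ((u@[b]) @ take (Suc j) v)" if "j < length v" for j v
    using that assms by (cases v) auto
  show ?thesis unfolding hit_def
  proof (intro bex_cong refl)
    fix v :: "bool list" assume "v \<in> {v. length v = length d}"
    then show "(\<forall>j<length d. restrict a K ((u @ [b]) @ take (Suc j) v) = d ! j) =
        (\<forall>j<length d. a ((u @ [b]) @ take (Suc j) v) = d ! j)" using * by auto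
  qed
qed

lemma ev_hit: "{a. hit a u d} \<in> sets label_space"
  using sets_hit[of label_space, OF comp_meas[of _ UNIV, folded label_space_eq]] by (simp add: space_label)

lemma ev_coord: "{a. a w = x} \<in> sets label_space"
proof -
  note [measurable] = comp_meas[of _ UNIV, folded label_space_eq]
  have "{a \<in> space label_space. a w = x} \<in> sets label_space" by measurable
  then show ?thesis by (simp add: space_label)
qed

fun pp :: "nat \<Rightarrow> real" where
  "pp 0 = 1"
| "pp (Suc n) = pp n - (pp n)^2/4"

lemma prob_coord: "measure label_space {a. a w = x} = 1/2"
proof -
  have m: "(\<lambda>\<omega>. \<omega> w) \<in> measurable label_space Bm"
    unfolding label_space_eq by (rule measurable_component_singleton) simp
  have "measure label_space {a. a w = x} = measure label_space ((\<lambda>\<omega>. \<omega> w) -` {x} \<inter> space label_space)"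
    by (simp add: space_label vimage_def)
  also have "\<dots> = measure (distr label_space Bm (\<lambda>\<omega>. \<omega> w)) {x}"
    by (rule measure_distr[symmetric]) (use m in auto)
  also have "distr label_space Bm (\<lambda>\<omega>. \<omega> w) = Bm"
    unfolding label_space_eq by (simp add: LP.PiM_component)
  also have "measure Bm {x} = 1/2"
    by (cases x) (simp_all add: measure_pmf_single)
  finally show ?thesis .
qed

lemma prob_hit: "measure label_space {a. hit a u d} = pp (length d)"
proof (induction d arbitrary: u)
  case Nil
  interpret prob_space label_space by (rule prob_space_label)
  show ?case using prob_space by (simp add: hit_Nil space_label)
next
  case (Cons x d)
  interpret prob_space label_space by (rule prob_space_label)
  define kk where "kk j = (if j = (0::nat) then {u@[False]} else if j = 1 then {u @ False # w |w. w \<noteq> []}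
     else if j = 2 then {u@[True]} else {u @ True # w |w. w \<noteq> []})" for j
  define A where "A j = (if j = (0::nat) then {b \<in> space (PiM (kk j) (\<lambda>_. Bm)). b (u@[False]) = x}
     else if j = 1 then {b \<in> space (PiM (kk j) (\<lambda>_. Bm)). hit b (u@[False]) d}
     else if j = 2 then {b \<in> space (PiM (kk j) (\<lambda>_. Bm)). b (u@[True]) = x}
     else {b \<in> space (PiM (kk j) (\<lambda>_. Bm)). hit b (u@[True]) d})" for j
  define G where "G j = (if j = (0::nat) then {a. a (u@[False]) = x}
     else if j = 1 then {a. hit a (u@[False]) d}
     else if j = 2 then {a. a (u@[True]) = x}
     else {a. hit a (u@[True]) d})" for j
  have ind: "indep_vars (\<lambda>j. PiM (kk j) (\<lambda>_. Bm)) (\<lambda>j \<omega>. restrict (\<lambda>i. \<omega> i) (kk j)) {0,1,2,3}"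
    by (rule indep_vars_restrict[OF indep_coords]) (auto simp: kk_def disjoint_family_on_def)
  have As: "A j \<in> sets (PiM (kk j) (\<lambda>_. Bm))" for j
  proof -
    note [measurable] = comp_meas
    show ?thesis unfolding A_def by (auto intro!: sets_hit comp_meas)
  qed
  have pre: "(\<lambda>\<omega>. restrict (\<lambda>i. \<omega> i) (kk j)) -` A j \<inter> space label_space = G j" for j
  proof -
    have sp: "restrict \<omega> K \<in> space (PiM K (\<lambda>_. Bm))" for \<omega> :: "bool list \<Rightarrow> bool" and K
      by (simp add: space_PiM)
    show ?thesis
      unfolding A_def G_def space_label using sp
      by (auto simp: kk_def hit_restrict)
  qed
  have pG: "prob (G j) = (if even j then 1/2 else pp (length d))" if "j \<in> {0,1,2,3}" for j
    using that by (auto simp: G_def prob_coord Cons.IH)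
  have two: "prob (G i \<inter> G (Suc i)) = prob (G i) * prob (G (Suc i))" if "i = 0 \<or> i = 2" for i
  proof -
    have "prob (\<Inter>j\<in>{i, Suc i}. (\<lambda>\<omega>. restrict (\<lambda>i. \<omega> i) (kk j)) -` A j \<inter> space label_space)
      = (\<Prod>j\<in>{i, Suc i}. prob ((\<lambda>\<omega>. restrict (\<lambda>i. \<omega> i) (kk j)) -` A j \<inter> space label_space))"
      by (rule indep_varsD[OF ind]) (use that As in auto)
    then show ?thesis unfolding pre by simp
  qed
  have four: "prob ((G 2 \<inter> G 3) \<inter> (G 0 \<inter> G 1)) = prob (G 0) * prob (G 1) * prob (G 2) * prob (G 3)"
  proof -
    have "prob (\<Inter>j\<in>{0,1,2,3}. (\<lambda>\<omega>. restrict (\<lambda>i. \<omega> i) (kk j)) -` A j \<inter> space label_space)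
      = (\<Prod>j\<in>{0,1,2,3}. prob ((\<lambda>\<omega>. restrict (\<lambda>i. \<omega> i) (kk j)) -` A j \<inter> space label_space))"
      by (rule indep_varsD[OF ind]) (use As in auto)
    then show ?thesis unfolding pre by (simp add: Int_ac mult_ac)
  qed
  have ev: "G j \<in> events" for j
    unfolding G_def by (simp add: ev_hit ev_coord)
  have E: "{a. hit a u (x#d)} = (G 0 \<inter> G 1) \<union> (G 2 \<inter> G 3)"
    unfolding G_def by (auto simp: hit_Cons)
  have "prob {a. hit a u (x#d)} = prob (G 0 \<inter> G 1) + prob ((G 2 \<inter> G 3) - (G 0 \<inter> G 1))"
    unfolding E by (rule finite_measure_Union') (use ev in auto)
  also have "prob ((G 2 \<inter> G 3) - (G 0 \<inter> G 1)) = prob (G 2 \<inter> G 3) - prob ((G 2 \<inter> G 3) \<inter> (G 0 \<inter> G 1))"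
    by (rule finite_measure_Diff') (use ev in auto)
  finally show ?case
    using two[of 0] two[of 2] four pG[of 0] pG[of 1] pG[of 2] pG[of 3]
    by (simp add: power2_eq_square field_simps)
qed


lemma pp_bounds: "0 \<le> pp n \<and> pp n \<le> 1"
proof (induction n)
  case (Suc n)
  then have a: "0 \<le> pp n" "pp n \<le> 1" by auto
  have "0 \<le> pp n * (1 - pp n / 4)" using a by (intro mult_nonneg_nonneg) auto
  moreover have "pp n * (1 - pp n / 4) = pp (Suc n)" by (simp add: power2_eq_square field_simps)
  moreover have "pp (Suc n) \<le> 1"
    unfolding pp.simps power2_eq_square using a mult_nonneg_nonneg[OF a(1) a(1)] by linarith
  ultimately show ?case by simp
qed simp

lemma pp_small: assumes "0 < e" shows "\<exists>n. pp n < e"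
proof -
  have dec: "decseq pp" by (rule decseq_SucI) simp
  obtain L where L: "pp \<longlonglongrightarrow> L" using decseq_convergent[OF dec, of 0] pp_bounds by blast
  have "(\<lambda>n. pp (Suc n)) \<longlonglongrightarrow> L" using L by (rule LIMSEQ_Suc)
  moreover have "(\<lambda>n. pp (Suc n)) \<longlonglongrightarrow> L - L^2/4"
    unfolding pp.simps by (auto intro!: tendsto_intros L)
  ultimately have "L = L - L^2/4" by (rule LIMSEQ_unique)
  then have "L = 0" by simp
  with L have "eventually (\<lambda>n. pp n < e) sequentially"
    using assms by (auto dest: order_tendstoD(2))
  then show ?thesis by (auto simp: eventually_sequentially)
qed

lemma card_DD_sum: "real (card (DD a n)) = (\<Sum>d\<in>{d. length d = n}. indicator {a. hit a [] d} a)"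
proof -
  have "real (card (DD a n)) = (\<Sum>d\<in>DD a n. 1)" by simp
  also have "\<dots> = (\<Sum>d\<in>{d. length d = n}. if hit a [] d then 1 else 0)"
    using sum.inter_filter[OF finite_len, of "\<lambda>_. 1::real" n "\<lambda>d. hit a [] d"] by (simp add: DD_def)
  finally show ?thesis by (simp add: indicator_def of_bool_def)
qed

lemma AE_half: "AE a in label_space. \<forall>m::nat. \<exists>n. real (card (DD a n)) * (real m + 1) < 2 ^ n"
proof (subst AE_all_countable, intro allI)
  fix m :: nat
  interpret prob_space label_space by (rule prob_space_label)
  define u where "u n a = (real m + 1) * (\<Sum>d\<in>{d. length d = n}. indicator {a. hit a [] d} a)" for n a
  have ucard: "u n a = real (card (DD a n)) * (real m + 1)" for n a
    unfolding u_def card_DD_sum by simp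
  have um[measurable]: "u n \<in> borel_measurable label_space" for n
    unfolding u_def using ev_hit by (intro borel_measurable_times borel_measurable_sum borel_measurable_indicator) auto
  have ui: "integrable label_space (u n)" for n
  proof -
    have "integrable label_space (indicator {a. hit a [] d} :: _ \<Rightarrow> real)" for d
      by (rule integrable_real_indicator) (auto simp: ev_hit emeasure_finite less_top[symmetric])
    then have "integrable label_space (\<lambda>a. \<Sum>d\<in>{d. length d = n}. indicator {a. hit a [] d} a :: real)"
      by (rule Bochner_Integration.integrable_sum)
    then show ?thesis unfolding u_def by (rule Bochner_Integration.integrable_mult_right)
  qed
  have uint: "(\<integral>a. u n a \<partial>label_space) = (real m + 1) * 2 ^ n * pp n" for n
  proof -
    have ii: "integrable label_space (indicator {a. hit a [] d} :: _ \<Rightarrow> real)" for d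
      by (rule integrable_real_indicator) (auto simp: ev_hit emeasure_finite less_top[symmetric])
    have "(\<integral>a. u n a \<partial>label_space) = (real m + 1) * (\<integral>a. (\<Sum>d\<in>{d. length d = n}. indicator {a. hit a [] d} a) \<partial>label_space)"
      unfolding u_def by simp
    also have "(\<integral>a. (\<Sum>d\<in>{d. length d = n}. indicator {a. hit a [] d} a) \<partial>label_space)
       = (\<Sum>d\<in>{d. length d = n}. (\<integral>a. indicator {a. hit a [] d} a \<partial>label_space) :: real)"
      by (rule Bochner_Integration.integral_sum) (auto simp: ev_hit emeasure_finite less_top[symmetric])
    also have "\<dots> = (\<Sum>d\<in>{d. length d = n}. prob {a. hit a [] d})"
      by (intro sum.cong refl) (auto simp: ev_hit emeasure_finite less_top[symmetric])
    also have "\<dots> = 2 ^ n * pp n"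
      by (simp add: prob_hit card_len)
    finally show ?thesis by simp
  qed
  define N where "N = {a \<in> space label_space. \<forall>n. 2 ^ n \<le> u n a}"
  have Ns: "N \<in> sets label_space" unfolding N_def by measurable
  have "prob N \<le> (real m + 1) * pp n" for n
  proof -
    have "prob N \<le> prob {a \<in> space label_space. u n a \<ge> 2 ^ n}"
      by (rule finite_measure_mono) (auto simp: N_def)
    also have "\<dots> \<le> (\<integral>a. u n a \<partial>label_space) / 2 ^ n"
      by (rule integral_Markov_inequality_measure[OF ui, of "space label_space"])
         (auto simp: u_def intro!: sum_nonneg AE_I2 mult_nonneg_nonneg)
    also have "\<dots> = (real m + 1) * pp n" by (simp add: uint)
    finally show ?thesis .
  qed
  moreover have "prob N \<le> 0"
  proof (rule field_le_epsilon)
    fix e :: real assume "0 < e"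
    then obtain n where "pp n < e / (real m + 1)" using pp_small[of "e / (real m + 1)"] by auto
    then have "(real m + 1) * pp n < e" by (simp add: field_simps)
    with \<open>prob N \<le> (real m + 1) * pp n\<close> show "prob N \<le> 0 + e" by simp
  qed
  then have "N \<in> null_sets label_space"
    using Ns by (simp add: null_sets_def emeasure_eq_measure measure_nonneg antisym)
  then show "AE a in label_space. \<exists>n. real (card (DD a n)) * (real m + 1) < 2 ^ n"
    by (rule AE_I') (auto simp: N_def ucard not_less)
qed


theorem proposition1p8:
  fixes lam :: real
  assumes "0 < lam" and "lam \<le> 1/2"
  shows "AE a in label_space. binary_S lam a \<in> null_sets lebesgue"
proof (cases "lam < 1/2")
  case True
  have l1: "lam < 1" using True by simp
  have "binary_S lam a \<in> null_sets lebesgue" for a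
  proof (rule null_crit[OF assms(1) l1])
    fix e :: real assume e: "e > 0"
    have "(\<lambda>n. (2*lam)^n * (lam/(1-lam))) \<longlonglongrightarrow> 0"
      by (intro tendsto_mult_left_zero LIMSEQ_power_zero) (use assms True in auto)
    then have "eventually (\<lambda>n. (2*lam)^n * (lam/(1-lam)) < e) sequentially"
      using e by (auto dest: order_tendstoD(2))
    then obtain n where n: "(2*lam)^n * (lam/(1-lam)) < e" by (auto simp: eventually_sequentially)
    have "real (card (DD a n)) * (lam ^ Suc n / (1 - lam)) \<le> 2 ^ n * (lam ^ Suc n / (1 - lam))"
    proof (rule mult_right_mono)
      show "real (card (DD a n)) \<le> 2 ^ n" using card_DD[of a n] by (metis numeral_power_le_of_nat_cancel_iff of_nat_le_iff of_nat_numeral of_nat_power)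
      show "0 \<le> lam ^ Suc n / (1 - lam)" using assms l1 by simp
    qed
    also have "\<dots> = (2*lam)^n * (lam/(1-lam))" by (simp add: power_mult_distrib)
    finally show "\<exists>n. real (card (DD a n)) * (lam ^ Suc n / (1 - lam)) < e" using n by (intro exI[of _ n]) simp
  qed
  then show ?thesis by (intro AE_I2) auto
next
  case False
  then have lh: "lam = 1/2" using assms by simp
  have "binary_S lam a \<in> null_sets lebesgue" if H: "\<forall>m::nat. \<exists>n. real (card (DD a n)) * (real m + 1) < 2 ^ n" for a
  proof (rule null_crit[OF assms(1)])
    show "lam < 1" using lh by simp
    fix e :: real assume e: "e > 0"
    obtain m :: nat where m: "inverse (real (Suc m)) < e" using reals_Archimedean[OF e] by blast
    obtain n where n: "real (card (DD a n)) * (real m + 1) < 2 ^ n" using H by blast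
    have eq: "lam ^ Suc n / (1 - lam) = 1 / 2 ^ n" unfolding lh power_one_over by simp
    have "real (card (DD a n)) * (1 / 2 ^ n) < 1 / (real m + 1)"
      using n by (simp add: field_simps)
    also have "\<dots> < e" using m by (simp add: inverse_eq_divide add.commute)
    finally show "\<exists>n. real (card (DD a n)) * (lam ^ Suc n / (1 - lam)) < e" using eq by (intro exI[of _ n]) simp
  qed
  then show ?thesis using AE_half by (auto elim: eventually_mono)
qed

end
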